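(* Let $t\in\mathbb{C}^\times$ with $t\neq q^{-2k}$ for all integers $k\ge0$. Then the map $T\mapsto\big(T(1),T(Z),\dots,T(Z^{n-1})\big)$ is a linear isomorphism from the space of $g_t$-twisted traces on $\mathcal{A}_+$ onto $\mathbb{C}^n$.
   Context: Let $q\in\mathbb{C}$ with $0<|q|<1$, $P\in\mathbb{C}[z]$ of degree $n\ge1$. $\mathcal{A}_P$ is generated by $u,v,Z,Z^{-1}$ with relations $ZZ^{-1}=Z^{-1}Z=1$, $ZuZ^{-1}=q^2u$, $ZvZ^{-1}=q^{-2}v$, $uv=P(q^{-1}Z)$, $vu=P(qZ)$, and $\mathcal{A}_+$ is its subalgebra generated by $u,v,Z$. $g_t$ is the automorphism $u\mapsto tu$, $v\mapsto t^{-1}v$, $Z\mapsto Z$ (it preserves $\mathcal{A}_+$). A $g_t$-twisted trace on $\mathcal{A}_+$ is a linear $T\colon\mathcal{A}_+\to\mathbb{C}$ with $T(ab)=T(b\,g_t(a))$ for all $a,b\in\mathcal{A}_+$. *)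

theory Defs
  imports Complex_Main "HOL-Computational_Algebra.Polynomial"
begin

text \<open>Free associative algebra on the letters u, v, Z, Z^-1 (ZI), with elements
  represented as finitely supported coefficient functions on words.\<close>

datatype gen = U | V | Z | ZI

type_synonym word = "gen list"
type_synonym elem = "word \<Rightarrow> complex"

definition fin_supp :: "elem \<Rightarrow> bool" where
  "fin_supp a \<longleftrightarrow> finite {w. a w \<noteq> 0}"

definition mono :: "word \<Rightarrow> elem" where
  "mono w = (\<lambda>w'. if w' = w then 1 else 0)"

definition eadd :: "elem \<Rightarrow> elem \<Rightarrow> elem" where
  "eadd a b = (\<lambda>w. a w + b w)"

definition esub :: "elem \<Rightarrow> elem \<Rightarrow> elem" where
  "esub a b = (\<lambda>w. a w - b w)"

definition scal :: "complex \<Rightarrow> elem \<Rightarrow> elem" where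
  "scal c a = (\<lambda>w. c * a w)"

definition fmul :: "elem \<Rightarrow> elem \<Rightarrow> elem" where
  "fmul a b = (\<lambda>w. \<Sum>k\<in>{0..length w}. a (take k w) * b (drop k w))"

text \<open>The element P(c Z) of the free algebra.\<close>
definition Pat :: "complex poly \<Rightarrow> complex \<Rightarrow> elem" where
  "Pat P c = (\<lambda>w. if (\<forall>x\<in>set w. x = Z) then coeff P (length w) * c ^ length w else 0)"

text \<open>Defining relations of A_P (as elements r with r = 0 in A_P).\<close>
definition rels :: "complex \<Rightarrow> complex poly \<Rightarrow> elem set" where
  "rels q P = { esub (mono [Z, ZI]) (mono []), esub (mono [ZI, Z]) (mono []),
                esub (mono [Z, U, ZI]) (scal (q^2) (mono [U])),
                esub (mono [Z, V, ZI]) (scal (inverse (q^2)) (mono [V])),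
                esub (mono [U, V]) (Pat P (inverse q)),
                esub (mono [V, U]) (Pat P q) }"

text \<open>Two-sided ideal of the free algebra generated by the relations; A_P is the quotient.\<close>
inductive_set rel_ideal :: "complex \<Rightarrow> complex poly \<Rightarrow> elem set" for q P where
  gen: "r \<in> rels q P \<Longrightarrow> r \<in> rel_ideal q P"
| add: "a \<in> rel_ideal q P \<Longrightarrow> b \<in> rel_ideal q P \<Longrightarrow> eadd a b \<in> rel_ideal q P"
| scal: "a \<in> rel_ideal q P \<Longrightarrow> scal c a \<in> rel_ideal q P"
| left: "a \<in> rel_ideal q P \<Longrightarrow> fmul (mono x) a \<in> rel_ideal q P"
| right: "a \<in> rel_ideal q P \<Longrightarrow> fmul a (mono x) \<in> rel_ideal q P"

text \<open>Elements of the free algebra in the letters u, v, Z only; their images in A_P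
  form the subalgebra A_+.  Hence A_+ = F_+ / (F_+ \<inter> rel_ideal).\<close>
definition Fplus :: "elem \<Rightarrow> bool" where
  "Fplus a \<longleftrightarrow> fin_supp a \<and> (\<forall>w. a w \<noteq> 0 \<longrightarrow> ZI \<notin> set w)"

definition wdeg :: "word \<Rightarrow> int" where
  "wdeg w = int (length (filter (\<lambda>x. x = U) w)) - int (length (filter (\<lambda>x. x = V) w))"

text \<open>The automorphism g_t: u \<mapsto> t u, v \<mapsto> t^-1 v, Z \<mapsto> Z (lifted to the free algebra).\<close>
definition gt :: "complex \<Rightarrow> elem \<Rightarrow> elem" where
  "gt t a = (\<lambda>w. t powi wdeg w * a w)"

definition ext :: "(word \<Rightarrow> complex) \<Rightarrow> elem \<Rightarrow> complex" where
  "ext f a = (\<Sum>w\<in>{w. a w \<noteq> 0}. a w * f w)"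

text \<open>g_t-twisted traces on A_+, encoded by their values on (Z^-1-free) words: a linear
  functional on F_+ that vanishes on F_+ \<inter> rel_ideal (i.e. descends to A_+) and satisfies
  T(ab) = T(b g_t(a)).  Values on words containing Z^-1 are normalised to 0.\<close>
definition twisted_traces :: "complex \<Rightarrow> complex poly \<Rightarrow> complex \<Rightarrow> (word \<Rightarrow> complex) set" where
  "twisted_traces q P t = {f.
     (\<forall>w. ZI \<in> set w \<longrightarrow> f w = 0) \<and>
     (\<forall>a. Fplus a \<and> a \<in> rel_ideal q P \<longrightarrow> ext f a = 0) \<and>
     (\<forall>a b. Fplus a \<and> Fplus b \<longrightarrow> ext f (fmul a b) = ext f (fmul b (gt t a)))}"

end

theory Submission
  imports Defs
begin


abbreviation supp :: "elem \<Rightarrow> word set" where "supp a \<equiv> {w. a w \<noteq> 0}"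

lemma ext_superset:
  assumes "finite S" "supp a \<subseteq> S"
  shows "ext f a = (\<Sum>w\<in>S. a w * f w)"
  unfolding ext_def
  by (rule sum.mono_neutral_left) (use assms in auto)

lemma fin_supp_eadd: "fin_supp a \<Longrightarrow> fin_supp b \<Longrightarrow> fin_supp (eadd a b)"
  unfolding fin_supp_def eadd_def by (rule finite_subset[of _ "supp a \<union> supp b"]) auto
lemma fin_supp_esub: "fin_supp a \<Longrightarrow> fin_supp b \<Longrightarrow> fin_supp (esub a b)"
  unfolding fin_supp_def esub_def by (rule finite_subset[of _ "supp a \<union> supp b"]) auto
lemma fin_supp_scal: "fin_supp a \<Longrightarrow> fin_supp (scal c a)"
  unfolding fin_supp_def scal_def by (rule finite_subset[of _ "supp a"]) auto
lemma fin_supp_mono: "fin_supp (mono w)"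
  unfolding fin_supp_def mono_def by (rule finite_subset[of _ "{w}"]) auto

lemma ext_eadd:
  assumes a: "fin_supp a" and b: "fin_supp b"
  shows "ext f (eadd a b) = ext f a + ext f b"
proof -
  let ?S = "supp a \<union> supp b"
  have fin: "finite ?S" using a b by (simp add: fin_supp_def)
  have "ext f (eadd a b) = (\<Sum>w\<in>?S. eadd a b w * f w)"
    by (rule ext_superset[OF fin]) (auto simp: eadd_def)
  also have "\<dots> = (\<Sum>w\<in>?S. a w * f w) + (\<Sum>w\<in>?S. b w * f w)"
    by (simp add: eadd_def distrib_right sum.distrib)
  also have "\<dots> = ext f a + ext f b"
    using ext_superset[OF fin, of a f] ext_superset[OF fin, of b f] by auto
  finally show ?thesis .
qed

lemma ext_esub:
  assumes a: "fin_supp a" and b: "fin_supp b"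
  shows "ext f (esub a b) = ext f a - ext f b"
proof -
  let ?S = "supp a \<union> supp b"
  have fin: "finite ?S" using a b by (simp add: fin_supp_def)
  have "ext f (esub a b) = (\<Sum>w\<in>?S. esub a b w * f w)"
    by (rule ext_superset[OF fin]) (auto simp: esub_def)
  also have "\<dots> = (\<Sum>w\<in>?S. a w * f w) - (\<Sum>w\<in>?S. b w * f w)"
    by (simp add: esub_def left_diff_distrib sum_subtractf)
  also have "\<dots> = ext f a - ext f b"
    using ext_superset[OF fin, of a f] ext_superset[OF fin, of b f] by auto
  finally show ?thesis .
qed

lemma ext_scal:
  assumes a: "fin_supp a"
  shows "ext f (scal c a) = c * ext f a"
proof -
  have fin: "finite (supp a)" using a by (simp add: fin_supp_def)
  have "ext f (scal c a) = (\<Sum>w\<in>supp a. scal c a w * f w)"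
    by (rule ext_superset[OF fin]) (auto simp: scal_def)
  also have "\<dots> = c * ext f a" by (simp add: scal_def ext_def sum_distrib_left mult.assoc)
  finally show ?thesis .
qed

lemma ext_mono: "ext f (mono w) = f w"
  by (subst ext_superset[of "{w}"]) (auto simp: mono_def)

lemma ext_diff_fun: "ext (\<lambda>w. f w - g w) a = ext f a - ext g a"
  unfolding ext_def by (simp add: right_diff_distrib sum_subtractf)

lemma split_count:
  "(\<Sum>k\<in>{0..length w}. if take k w = x \<and> drop k w = y then (c::complex) else 0) = (if w = x @ y then c else 0)"
proof -
  have eq: "\<And>k. k \<in> {0..length w} \<Longrightarrow> (take k w = x \<and> drop k w = y) = (k = length x \<and> w = x @ y)"
  proof -
    fix k assume k: "k \<in> {0..length w}"
    show "(take k w = x \<and> drop k w = y) = (k = length x \<and> w = x @ y)"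
    proof
      assume h: "take k w = x \<and> drop k w = y"
      then have "w = x @ y" by (metis append_take_drop_id)
      moreover have "length x = k" using h k by auto
      ultimately show "k = length x \<and> w = x @ y" by simp
    qed auto
  qed
  have "(\<Sum>k\<in>{0..length w}. if take k w = x \<and> drop k w = y then c else 0)
      = (\<Sum>k\<in>{0..length w}. if k = length x then (if w = x @ y then c else 0) else 0)"
    by (rule sum.cong) (auto simp: eq)
  also have "\<dots> = (if w = x @ y then c else 0)"
    by (cases "w = x @ y") auto
  finally show ?thesis .
qed

lemma supp_fmul: "supp (fmul a b) \<subseteq> (\<lambda>p. fst p @ snd p) ` (supp a \<times> supp b)"
proof
  fix w assume "w \<in> supp (fmul a b)"
  then obtain k where "k \<in> {0..length w}" "a (take k w) * b (drop k w) \<noteq> 0"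
    unfolding fmul_def by (auto elim: sum.not_neutral_contains_not_neutral)
  then show "w \<in> (\<lambda>p. fst p @ snd p) ` (supp a \<times> supp b)"
    by (auto intro!: image_eqI[where x="(take k w, drop k w)"])
qed

lemma fin_supp_fmul: "fin_supp a \<Longrightarrow> fin_supp b \<Longrightarrow> fin_supp (fmul a b)"
  unfolding fin_supp_def by (rule finite_subset[OF supp_fmul]) auto

lemma Fplus_fmul: "Fplus a \<Longrightarrow> Fplus b \<Longrightarrow> Fplus (fmul a b)"
  unfolding Fplus_def using fin_supp_fmul supp_fmul[of a b] by fastforce

lemma fmul_pointwise:
  assumes "finite A" "finite B" "supp a \<subseteq> A" "supp b \<subseteq> B"
  shows "fmul a b w = (\<Sum>p\<in>A\<times>B. if w = fst p @ snd p then a (fst p) * b (snd p) else 0)"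
proof -
  have "fmul a b w = (\<Sum>k\<in>{0..length w}. \<Sum>p\<in>A\<times>B. if (take k w, drop k w) = p then a (fst p) * b (snd p) else 0)"
    unfolding fmul_def
  proof (rule sum.cong[OF refl])
    fix k
    show "a (take k w) * b (drop k w) = (\<Sum>p\<in>A\<times>B. if (take k w, drop k w) = p then a (fst p) * b (snd p) else 0)"
      using assms by (cases "(take k w, drop k w) \<in> A \<times> B") (auto simp: sum.delta' subset_iff)
  qed
  also have "\<dots> = (\<Sum>p\<in>A\<times>B. \<Sum>k\<in>{0..length w}. if take k w = fst p \<and> drop k w = snd p then a (fst p) * b (snd p) else 0)"
    by (subst sum.swap) (auto intro!: sum.cong simp: prod_eq_iff)
  also have "\<dots> = (\<Sum>p\<in>A\<times>B. if w = fst p @ snd p then a (fst p) * b (snd p) else 0)"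
    by (simp add: split_count)
  finally show ?thesis .
qed

lemma ext_fmul:
  assumes a: "fin_supp a" and b: "fin_supp b"
  shows "ext F (fmul a b) = (\<Sum>p\<in>supp a \<times> supp b. a (fst p) * b (snd p) * F (fst p @ snd p))"
proof -
  let ?A = "supp a" and ?B = "supp b"
  let ?W = "(\<lambda>p. fst p @ snd p) ` (?A \<times> ?B)"
  have fA: "finite ?A" and fB: "finite ?B" using a b by (auto simp: fin_supp_def)
  have fW: "finite ?W" using fA fB by auto
  have "ext F (fmul a b) = (\<Sum>w\<in>?W. fmul a b w * F w)"
    by (rule ext_superset[OF fW supp_fmul])
  also have "\<dots> = (\<Sum>w\<in>?W. \<Sum>p\<in>?A\<times>?B. if w = fst p @ snd p then a (fst p) * b (snd p) * F w else 0)"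
    by (intro sum.cong refl, subst fmul_pointwise[OF fA fB]) (auto simp: sum_distrib_right intro!: sum.cong)
  also have "\<dots> = (\<Sum>p\<in>?A\<times>?B. \<Sum>w\<in>?W. if w = fst p @ snd p then a (fst p) * b (snd p) * F w else 0)"
    by (rule sum.swap)
  also have "\<dots> = (\<Sum>p\<in>?A\<times>?B. a (fst p) * b (snd p) * F (fst p @ snd p))"
    using fW by (intro sum.cong refl) (auto simp: sum.delta')
  finally show ?thesis .
qed

lemma ext_fmul':
  assumes a: "fin_supp a" and b: "fin_supp b"
  shows "ext F (fmul a b) = (\<Sum>x\<in>supp a. \<Sum>y\<in>supp b. a x * b y * F (x @ y))"
  unfolding ext_fmul[OF a b] sum.cartesian_product by (simp add: split_def)

lemma supp_mono: "supp (mono x) = {x}" by (auto simp: mono_def)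

lemma ext_fmul_mono_left:
  assumes b: "fin_supp b"
  shows "ext F (fmul (mono x) b) = ext (\<lambda>w. F (x @ w)) b"
  unfolding ext_fmul'[OF fin_supp_mono b] supp_mono by (simp add: ext_def mono_def)

lemma ext_fmul_mono_right:
  assumes a: "fin_supp a"
  shows "ext F (fmul a (mono y)) = ext (\<lambda>w. F (w @ y)) a"
  unfolding ext_fmul'[OF a fin_supp_mono] supp_mono by (simp add: ext_def mono_def)

lemma supp_Pat: "supp (Pat P c) \<subseteq> (\<lambda>i. replicate i Z) ` {..degree P}"
proof
  fix w assume "w \<in> supp (Pat P c)"
  then have h: "\<forall>x\<in>set w. x = Z" "coeff P (length w) \<noteq> 0" by (auto simp: Pat_def split: if_splits)
  then have "length w \<le> degree P" by (simp add: le_degree)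
  moreover have "w = replicate (length w) Z" using h(1) by (simp add: replicate_length_same)
  ultimately show "w \<in> (\<lambda>i. replicate i Z) ` {..degree P}" by auto
qed

lemma fin_supp_Pat: "fin_supp (Pat P c)"
  unfolding fin_supp_def by (rule finite_subset[OF supp_Pat]) auto

lemma ext_Pat: "ext F (Pat P c) = (\<Sum>i\<le>degree P. coeff P i * c ^ i * F (replicate i Z))"
proof -
  have "ext F (Pat P c) = (\<Sum>w\<in>(\<lambda>i. replicate i Z) ` {..degree P}. Pat P c w * F w)"
    by (rule ext_superset[OF _ supp_Pat]) auto
  also have "\<dots> = (\<Sum>i\<le>degree P. Pat P c (replicate i Z) * F (replicate i Z))"
    by (subst sum.reindex) (auto simp: inj_on_def)
  also have "\<dots> = (\<Sum>i\<le>degree P. coeff P i * c ^ i * F (replicate i Z))"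
    by (simp add: Pat_def)
  finally show ?thesis .
qed

lemma Fplus_mono: "ZI \<notin> set w \<Longrightarrow> Fplus (mono w)"
  unfolding Fplus_def using fin_supp_mono[of w] by (auto simp: mono_def)
lemma Fplus_esub: "Fplus a \<Longrightarrow> Fplus b \<Longrightarrow> Fplus (esub a b)"
  unfolding Fplus_def using fin_supp_esub[of a b] by (auto simp: esub_def; metis)
lemma Fplus_scal: "Fplus a \<Longrightarrow> Fplus (scal c a)"
  unfolding Fplus_def using fin_supp_scal[of a c] by (auto simp: scal_def)
lemma Fplus_Pat: "Fplus (Pat P c)"
  unfolding Fplus_def using fin_supp_Pat[of P c] by (auto simp: Pat_def split: if_splits)

lemma fmul_esub_left: "fmul (esub a b) c = esub (fmul a c) (fmul b c)"
  by (simp add: fmul_def esub_def left_diff_distrib sum_subtractf)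
lemma fmul_esub_right: "fmul a (esub b c) = esub (fmul a b) (fmul a c)"
  by (simp add: fmul_def esub_def right_diff_distrib sum_subtractf)
lemma fmul_scal_left: "fmul (scal k a) c = scal k (fmul a c)"
  by (simp add: fmul_def scal_def sum_distrib_left mult.assoc)
lemma fmul_scal_right: "fmul a (scal k c) = scal k (fmul a c)"
  by (simp add: fmul_def scal_def sum_distrib_left mult.assoc mult.left_commute)
lemma fmul_mono_mono: "fmul (mono x) (mono y) = mono (x @ y)"
proof
  fix w
  have "fmul (mono x) (mono y) w = (\<Sum>k\<in>{0..length w}. if take k w = x \<and> drop k w = y then (1::complex) else 0)"
    unfolding fmul_def mono_def by (intro sum.cong) auto
  then show "fmul (mono x) (mono y) w = mono (x @ y) w" by (simp add: split_count mono_def)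
qed

lemma ideal_esub: "a \<in> rel_ideal q P \<Longrightarrow> b \<in> rel_ideal q P \<Longrightarrow> esub a b \<in> rel_ideal q P"
proof -
  assume a: "a \<in> rel_ideal q P" and b: "b \<in> rel_ideal q P"
  have "esub a b = eadd a (scal (-1) b)" by (auto simp: esub_def eadd_def scal_def)
  then show ?thesis using a b by (simp add: rel_ideal.add rel_ideal.scal)
qed

lemma ideal_mul: "a \<in> rel_ideal q P \<Longrightarrow> fmul (mono x) (fmul a (mono y)) \<in> rel_ideal q P"
  by (intro rel_ideal.left rel_ideal.right)

definition cond2 :: "complex \<Rightarrow> complex poly \<Rightarrow> (word \<Rightarrow> complex) \<Rightarrow> bool" where
  "cond2 q P f \<longleftrightarrow> (\<forall>a. Fplus a \<and> a \<in> rel_ideal q P \<longrightarrow> ext f a = 0)"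

lemma cond2_sandwich:
  assumes c: "cond2 q P f" and r: "r \<in> rel_ideal q P" "Fplus r" and x: "ZI \<notin> set x" and y: "ZI \<notin> set y"
  shows "ext (\<lambda>w. f (x @ w @ y)) r = 0"
proof -
  let ?E = "fmul (mono x) (fmul r (mono y))"
  have "?E \<in> rel_ideal q P" using r(1) by (rule ideal_mul)
  moreover have "Fplus ?E" using r x y by (intro Fplus_fmul Fplus_mono) auto
  ultimately have "ext f ?E = 0" using c by (auto simp: cond2_def)
  moreover have "fin_supp r" using r by (simp add: Fplus_def)
  ultimately show ?thesis
    by (simp add: ext_fmul_mono_left fin_supp_fmul fin_supp_mono ext_fmul_mono_right)
qed

lemma I_UV:
  assumes c: "cond2 q P f" and x: "ZI \<notin> set x" and y: "ZI \<notin> set y"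
  shows "f (x @ [U,V] @ y) = (\<Sum>i\<le>degree P. coeff P i * inverse q ^ i * f (x @ replicate i Z @ y))"
proof -
  let ?r = "esub (mono [U,V]) (Pat P (inverse q))"
  have "?r \<in> rel_ideal q P" by (intro rel_ideal.gen) (simp add: rels_def)
  moreover have "Fplus ?r" by (intro Fplus_esub Fplus_mono Fplus_Pat) auto
  ultimately have "ext (\<lambda>w. f (x @ w @ y)) ?r = 0" using cond2_sandwich[OF c _ _ x y] by blast
  then show ?thesis by (simp add: ext_esub fin_supp_mono fin_supp_Pat ext_mono ext_Pat)
qed

lemma I_VU:
  assumes c: "cond2 q P f" and x: "ZI \<notin> set x" and y: "ZI \<notin> set y"
  shows "f (x @ [V,U] @ y) = (\<Sum>i\<le>degree P. coeff P i * q ^ i * f (x @ replicate i Z @ y))"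
proof -
  let ?r = "esub (mono [V,U]) (Pat P q)"
  have "?r \<in> rel_ideal q P" by (intro rel_ideal.gen) (simp add: rels_def)
  moreover have "Fplus ?r" by (intro Fplus_esub Fplus_mono Fplus_Pat) auto
  ultimately have "ext (\<lambda>w. f (x @ w @ y)) ?r = 0" using cond2_sandwich[OF c _ _ x y] by blast
  then show ?thesis by (simp add: ext_esub fin_supp_mono fin_supp_Pat ext_mono ext_Pat)
qed

lemma I_ZU:
  assumes c: "cond2 q P f" and x: "ZI \<notin> set x" and y: "ZI \<notin> set y"
  shows "f (x @ [Z,U] @ y) = q^2 * f (x @ [U,Z] @ y)"
proof -
  let ?r1 = "esub (mono [Z, U, ZI]) (scal (q^2) (mono [U]))"
  let ?r2 = "esub (mono [ZI, Z]) (mono [])"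
  let ?D = "esub (fmul ?r1 (mono [Z])) (fmul (mono [Z,U]) ?r2)"
  have "?r1 \<in> rel_ideal q P" "?r2 \<in> rel_ideal q P" by (auto intro!: rel_ideal.gen simp: rels_def)
  then have "?D \<in> rel_ideal q P" by (blast intro: ideal_esub rel_ideal.left rel_ideal.right)
  moreover have D: "?D = esub (mono [Z,U]) (scal (q^2) (mono [U,Z]))"
    by (simp add: fmul_esub_left fmul_esub_right fmul_scal_left fmul_mono_mono) (auto simp: esub_def scal_def)
  moreover have "Fplus (esub (mono [Z,U]) (scal (q^2) (mono [U,Z])))"
    by (intro Fplus_esub Fplus_mono Fplus_scal) auto
  ultimately have "ext (\<lambda>w. f (x @ w @ y)) (esub (mono [Z,U]) (scal (q^2) (mono [U,Z]))) = 0"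
    using cond2_sandwich[OF c _ _ x y] by metis
  then show ?thesis by (simp add: ext_esub fin_supp_mono fin_supp_scal ext_scal ext_mono)
qed

lemma I_ZV:
  assumes c: "cond2 q P f" and x: "ZI \<notin> set x" and y: "ZI \<notin> set y"
  shows "f (x @ [Z,V] @ y) = inverse (q^2) * f (x @ [V,Z] @ y)"
proof -
  let ?r1 = "esub (mono [Z, V, ZI]) (scal (inverse (q^2)) (mono [V]))"
  let ?r2 = "esub (mono [ZI, Z]) (mono [])"
  let ?D = "esub (fmul ?r1 (mono [Z])) (fmul (mono [Z,V]) ?r2)"
  have "?r1 \<in> rel_ideal q P" "?r2 \<in> rel_ideal q P" by (auto intro!: rel_ideal.gen simp: rels_def)
  then have "?D \<in> rel_ideal q P" by (blast intro: ideal_esub rel_ideal.left rel_ideal.right)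
  moreover have D: "?D = esub (mono [Z,V]) (scal (inverse (q^2)) (mono [V,Z]))"
    by (simp add: fmul_esub_left fmul_esub_right fmul_scal_left fmul_mono_mono) (auto simp: esub_def scal_def)
  moreover have "Fplus (esub (mono [Z,V]) (scal (inverse (q^2)) (mono [V,Z])))"
    by (intro Fplus_esub Fplus_mono Fplus_scal) auto
  ultimately have "ext (\<lambda>w. f (x @ w @ y)) (esub (mono [Z,V]) (scal (inverse (q^2)) (mono [V,Z]))) = 0"
    using cond2_sandwich[OF c _ _ x y] by metis
  then show ?thesis by (simp add: ext_esub fin_supp_mono fin_supp_scal ext_scal ext_mono)
qed



definition cond3 :: "complex \<Rightarrow> (word \<Rightarrow> complex) \<Rightarrow> bool" where
  "cond3 t f \<longleftrightarrow> (\<forall>a b. Fplus a \<and> Fplus b \<longrightarrow> ext f (fmul a b) = ext f (fmul b (gt t a)))"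

lemma gt_mono: "gt t (mono x) = scal (t powi wdeg x) (mono x)"
  by (auto simp: gt_def scal_def mono_def)

lemma cyc:
  assumes c: "cond3 t f" and x: "ZI \<notin> set x" and y: "ZI \<notin> set y"
  shows "f (x @ y) = t powi wdeg x * f (y @ x)"
proof -
  have "ext f (fmul (mono x) (mono y)) = ext f (fmul (mono y) (gt t (mono x)))"
    using c x y by (simp add: cond3_def Fplus_mono)
  then show ?thesis
    by (simp add: fmul_mono_mono gt_mono fmul_scal_right ext_scal fin_supp_mono ext_mono)
qed

lemma cyc_cond3:
  assumes t: "t \<noteq> 0" and h: "\<And>x y. ZI \<notin> set x \<Longrightarrow> ZI \<notin> set y \<Longrightarrow> f (x @ y) = t powi wdeg x * f (y @ x)"
  shows "cond3 t f"
  unfolding cond3_def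
proof (intro allI impI)
  fix a b assume ab: "Fplus a \<and> Fplus b"
  then have fa: "fin_supp a" and fb: "fin_supp b" by (auto simp: Fplus_def)
  have sg: "supp (gt t a) = supp a" using t by (auto simp: gt_def)
  have fg: "fin_supp (gt t a)" using fa sg by (simp add: fin_supp_def)
  have "ext f (fmul a b) = (\<Sum>x\<in>supp a. \<Sum>y\<in>supp b. a x * b y * f (x @ y))"
    by (rule ext_fmul'[OF fa fb])
  also have "\<dots> = (\<Sum>x\<in>supp a. \<Sum>y\<in>supp b. b y * gt t a x * f (y @ x))"
  proof (intro sum.cong refl)
    fix x y assume "x \<in> supp a" "y \<in> supp b"
    then have "ZI \<notin> set x" "ZI \<notin> set y" using ab by (auto simp: Fplus_def)
    then show "a x * b y * f (x @ y) = b y * gt t a x * f (y @ x)"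
      by (subst h) (auto simp: gt_def)
  qed
  also have "\<dots> = (\<Sum>y\<in>supp b. \<Sum>x\<in>supp a. b y * gt t a x * f (y @ x))"
    by (rule sum.swap)
  also have "\<dots> = ext f (fmul b (gt t a))"
    by (subst ext_fmul'[OF fb fg]) (simp add: sg)
  finally show "ext f (fmul a b) = ext f (fmul b (gt t a))" .
qed

lemma CZU1:
  assumes c: "cond2 q P f" and x: "ZI \<notin> set x" and y: "ZI \<notin> set y"
  shows "f (x @ Z # replicate l U @ y) = (q^2)^l * f (x @ replicate l U @ Z # y)"
  using x
proof (induction l arbitrary: x)
  case 0 then show ?case by simp
next
  case (Suc l)
  have "f (x @ Z # replicate (Suc l) U @ y) = f (x @ [Z,U] @ (replicate l U @ y))" by simp
  also have "\<dots> = q^2 * f (x @ [U,Z] @ (replicate l U @ y))"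
    using Suc.prems y by (intro I_ZU[OF c]) auto
  also have "f (x @ [U,Z] @ (replicate l U @ y)) = f ((x @ [U]) @ Z # replicate l U @ y)" by simp
  also have "\<dots> = (q^2)^l * f ((x @ [U]) @ replicate l U @ Z # y)"
    using Suc.prems by (intro Suc.IH) auto
  also have "(x @ [U]) @ replicate l U @ Z # y = x @ replicate (Suc l) U @ Z # y"
    by (simp add: replicate_app_Cons_same)
  finally show ?case by simp
qed

lemma CZV1:
  assumes c: "cond2 q P f" and x: "ZI \<notin> set x" and y: "ZI \<notin> set y"
  shows "f (x @ Z # replicate l V @ y) = (inverse (q^2))^l * f (x @ replicate l V @ Z # y)"
  using x
proof (induction l arbitrary: x)
  case 0 then show ?case by simp
next
  case (Suc l)
  have "f (x @ Z # replicate (Suc l) V @ y) = f (x @ [Z,V] @ (replicate l V @ y))" by simp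
  also have "\<dots> = inverse (q^2) * f (x @ [V,Z] @ (replicate l V @ y))"
    using Suc.prems y by (intro I_ZV[OF c]) auto
  also have "f (x @ [V,Z] @ (replicate l V @ y)) = f ((x @ [V]) @ Z # replicate l V @ y)" by simp
  also have "\<dots> = (inverse (q^2))^l * f ((x @ [V]) @ replicate l V @ Z # y)"
    using Suc.prems by (intro Suc.IH) auto
  also have "(x @ [V]) @ replicate l V @ Z # y = x @ replicate (Suc l) V @ Z # y"
    by (simp add: replicate_app_Cons_same)
  finally show ?case by simp
qed

lemma CZU:
  assumes c: "cond2 q P f" and x: "ZI \<notin> set x" and y: "ZI \<notin> set y"
  shows "f (x @ replicate i Z @ replicate l U @ y) = (q^2)^(i*l) * f (x @ replicate l U @ replicate i Z @ y)"
  using x y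
proof (induction i arbitrary: x y)
  case 0 then show ?case by simp
next
  case (Suc i)
  have "f (x @ replicate (Suc i) Z @ replicate l U @ y) = f ((x @ [Z]) @ replicate i Z @ replicate l U @ y)"
    by (simp add: replicate_app_Cons_same)
  also have "\<dots> = (q^2)^(i*l) * f ((x @ [Z]) @ replicate l U @ replicate i Z @ y)"
    using Suc.prems by (intro Suc.IH) auto
  also have "f ((x @ [Z]) @ replicate l U @ replicate i Z @ y) = f (x @ Z # replicate l U @ (replicate i Z @ y))" by simp
  also have "\<dots> = (q^2)^l * f (x @ replicate l U @ Z # (replicate i Z @ y))"
    using Suc.prems by (intro CZU1[OF c]) auto
  finally show ?case by (simp add: power_add mult.commute)
qed

lemma CZV:
  assumes c: "cond2 q P f" and x: "ZI \<notin> set x" and y: "ZI \<notin> set y"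
  shows "f (x @ replicate i Z @ replicate l V @ y) = (inverse (q^2))^(i*l) * f (x @ replicate l V @ replicate i Z @ y)"
  using x y
proof (induction i arbitrary: x y)
  case 0 then show ?case by simp
next
  case (Suc i)
  have "f (x @ replicate (Suc i) Z @ replicate l V @ y) = f ((x @ [Z]) @ replicate i Z @ replicate l V @ y)"
    by (simp add: replicate_app_Cons_same)
  also have "\<dots> = (inverse (q^2))^(i*l) * f ((x @ [Z]) @ replicate l V @ replicate i Z @ y)"
    using Suc.prems by (intro Suc.IH) auto
  also have "f ((x @ [Z]) @ replicate l V @ replicate i Z @ y) = f (x @ Z # replicate l V @ (replicate i Z @ y))" by simp
  also have "\<dots> = (inverse (q^2))^l * f (x @ replicate l V @ Z # (replicate i Z @ y))"
    using Suc.prems by (intro CZV1[OF c]) auto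
  finally show ?case by (simp add: power_add mult.commute)
qed



definition nf :: "int \<Rightarrow> nat \<Rightarrow> word" where
  "nf k m = (if 0 \<le> k then replicate (nat k) U else replicate (nat (-k)) V) @ replicate m Z"

definition step :: "complex \<Rightarrow> complex poly \<Rightarrow> gen \<Rightarrow> int \<Rightarrow> nat \<Rightarrow> (complex \<times> int \<times> nat) list" where
  "step q P g k m = (case g of
      Z \<Rightarrow> [(q powi (2*k), k, Suc m)]
    | U \<Rightarrow> (if 0 \<le> k then [(1, k+1, m)]
           else map (\<lambda>i. (coeff P i * q powi ((2*k+1) * int i), k+1, m+i)) [0..<Suc (degree P)])
    | V \<Rightarrow> (if k \<le> 0 then [(1, k-1, m)]
           else map (\<lambda>i. (coeff P i * q powi ((2*k-1) * int i), k-1, m+i)) [0..<Suc (degree P)])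
    | ZI \<Rightarrow> [])"

fun expand :: "complex \<Rightarrow> complex poly \<Rightarrow> word \<Rightarrow> (complex \<times> int \<times> nat) list" where
  "expand q P [] = [(1,0,0)]"
| "expand q P (g#w) = concat (map (\<lambda>(c,k,m). map (\<lambda>(c',k',m'). (c*c',k',m')) (step q P g k m)) (expand q P w))"

lemma sum_upt_Suc: "sum_list (map F [0..<Suc n]) = (\<Sum>i\<le>n. F i)"
proof (induction n)
  case 0 then show ?case by simp
next
  case (Suc n)
  have "sum_list (map F [0..<Suc (Suc n)]) = sum_list (map F [0..<Suc n]) + F (Suc n)" by (simp add: add.assoc)
  also have "\<dots> = (\<Sum>i\<le>n. F i) + F (Suc n)" using Suc by simp
  also have "\<dots> = (\<Sum>i\<le>Suc n. F i)" by (simp add: atMost_Suc add.commute)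
  finally show ?case .
qed

lemma powi_pos: "0 \<le> k \<Longrightarrow> (x::complex) powi (2*k) = (x^2)^(nat k)"
proof -
  assume k: "0 \<le> k"
  have "x powi (2*k) = (x powi 2) powi k" by (rule power_int_mult)
  also have "\<dots> = (x^2) powi (int (nat k))" using k by simp
  also have "\<dots> = (x^2)^(nat k)" by (rule power_int_of_nat)
  finally show ?thesis .
qed

lemma powi_neg: "k < 0 \<Longrightarrow> (x::complex) powi (2*k) = (inverse (x^2))^(nat (-k))"
proof -
  assume k: "k < 0"
  have "x powi (2*k) = x powi (- (2 * (-k)))" by simp
  also have "\<dots> = inverse (x powi (2 * (-k)))" by (rule power_int_minus)
  also have "x powi (2 * (-k)) = (x^2)^(nat (-k))" using k by (intro powi_pos) auto
  finally show ?thesis by (simp add: power_inverse)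
qed

lemma coefU:
  assumes q: "(q::complex) \<noteq> 0" and j: "j \<ge> 1"
  shows "inverse q ^ i * (inverse (q^2))^(i*(j-1)) = q powi ((2 * (- int j) + 1) * int i)"
proof -
  obtain j' where j': "j = Suc j'" using j by (cases j) auto
  have e: "(2 * (- int j) + 1) * int i = - int (i + 2*(i*(j-1)))" unfolding j'
    by (simp add: algebra_simps)
  have "inverse q ^ i * (inverse (q^2))^(i*(j-1)) = inverse (q^i) * inverse ((q^2)^(i*(j-1)))"
    by (simp only: power_inverse)
  also have "\<dots> = inverse (q^i * (q^2)^(i*(j-1)))" by (simp only: inverse_mult_distrib)
  also have "q^i * (q^2)^(i*(j-1)) = q ^ (i + 2*(i*(j-1)))" by (simp only: power_add power_mult)
  finally have "inverse q ^ i * (inverse (q^2))^(i*(j-1)) = inverse (q ^ (i + 2*(i*(j-1))))" .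
  also have "\<dots> = q powi ((2 * (- int j) + 1) * int i)"
    by (subst e, subst power_int_minus, subst power_int_of_nat, rule refl)
  finally show ?thesis .
qed

lemma coefV:
  assumes j: "j \<ge> 1"
  shows "(q::complex) ^ i * (q^2)^(i*(j-1)) = q powi ((2 * int j - 1) * int i)"
proof -
  obtain j' where j': "j = Suc j'" using j by (cases j) auto
  have e: "(2 * int j - 1) * int i = int (i + 2*(i*(j-1)))" unfolding j'
    by (simp add: algebra_simps)
  show ?thesis by (subst e, subst power_int_of_nat, simp add: power_add power_mult)
qed

lemma nf_pos: "0 \<le> k \<Longrightarrow> nf k m = replicate (nat k) U @ replicate m Z" by (simp add: nf_def)
lemma nf_neg: "k < 0 \<Longrightarrow> nf k m = replicate (nat (-k)) V @ replicate m Z" by (simp add: nf_def)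
lemma nf_ZI: "ZI \<notin> set (nf k m)" by (auto simp: nf_def)

lemma rep_Z_add: "replicate i Z @ replicate m Z @ z = replicate (m+i) Z @ z"
  by (simp add: replicate_add[symmetric] add.commute)

lemma step_Z:
  assumes c: "cond2 q P f" and x: "ZI \<notin> set x" and z: "ZI \<notin> set z"
  shows "f (x @ Z # nf k m @ z) = sum_list (map (\<lambda>(c,k',m'). c * f (x @ nf k' m' @ z)) (step q P Z k m))"
proof (cases "0 \<le> k")
  case True
  have "f (x @ Z # nf k m @ z) = f (x @ Z # replicate (nat k) U @ (replicate m Z @ z))"
    using True by (simp add: nf_pos)
  also have "\<dots> = (q^2)^(nat k) * f (x @ replicate (nat k) U @ Z # (replicate m Z @ z))"
    using x z by (intro CZU1[OF c]) auto
  also have "x @ replicate (nat k) U @ Z # (replicate m Z @ z) = x @ nf k (Suc m) @ z"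
    using True by (simp add: nf_pos)
  finally show ?thesis using True by (simp add: step_def powi_pos)
next
  case False
  have "f (x @ Z # nf k m @ z) = f (x @ Z # replicate (nat (-k)) V @ (replicate m Z @ z))"
    using False by (simp add: nf_neg)
  also have "\<dots> = (inverse (q^2))^(nat (-k)) * f (x @ replicate (nat (-k)) V @ Z # (replicate m Z @ z))"
    using x z by (intro CZV1[OF c]) auto
  also have "x @ replicate (nat (-k)) V @ Z # (replicate m Z @ z) = x @ nf k (Suc m) @ z"
    using False by (simp add: nf_neg)
  finally show ?thesis using False by (simp add: step_def powi_neg)
qed

lemma step_U:
  assumes c: "cond2 q P f" and q: "q \<noteq> 0" and x: "ZI \<notin> set x" and z: "ZI \<notin> set z"
  shows "f (x @ U # nf k m @ z) = sum_list (map (\<lambda>(c,k',m'). c * f (x @ nf k' m' @ z)) (step q P U k m))"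
proof (cases "0 \<le> k")
  case True
  have e: "nat (k+1) = Suc (nat k)" using True by simp
  show ?thesis using True by (simp add: step_def nf_pos e)
next
  case False
  define j where "j = nat (-k)"
  have j: "j \<ge> 1" "k = - int j" using False by (auto simp: j_def)
  have rj: "replicate j V = V # replicate (j-1) V" using j(1) by (cases j) auto
  have nfk: "nf k m = V # replicate (j-1) V @ replicate m Z"
    using False by (simp add: nf_neg j_def[symmetric] rj)
  have nfk1: "\<And>i. nf (k+1) (m+i) = replicate (j-1) V @ replicate (m+i) Z"
    using j by (simp add: nf_def nat_diff_distrib')
  have "f (x @ U # nf k m @ z) = f (x @ [U,V] @ (replicate (j-1) V @ replicate m Z @ z))"
    by (simp add: nfk)
  also have "\<dots> = (\<Sum>i\<le>degree P. coeff P i * inverse q ^ i * f (x @ replicate i Z @ (replicate (j-1) V @ replicate m Z @ z)))"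
    using x z by (intro I_UV[OF c]) auto
  also have "\<dots> = (\<Sum>i\<le>degree P. coeff P i * q powi ((2*k+1) * int i) * f (x @ nf (k+1) (m+i) @ z))"
  proof (intro sum.cong refl)
    fix i
    have "f (x @ replicate i Z @ (replicate (j-1) V @ replicate m Z @ z))
        = (inverse (q^2))^(i*(j-1)) * f (x @ replicate (j-1) V @ replicate i Z @ (replicate m Z @ z))"
      using x z by (intro CZV[OF c]) auto
    also have "x @ replicate (j-1) V @ replicate i Z @ (replicate m Z @ z) = x @ nf (k+1) (m+i) @ z"
      by (simp add: nfk1 rep_Z_add)
    finally show "coeff P i * inverse q ^ i * f (x @ replicate i Z @ (replicate (j-1) V @ replicate m Z @ z))
        = coeff P i * q powi ((2*k+1) * int i) * f (x @ nf (k+1) (m+i) @ z)"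
      using coefU[OF q j(1), of i] j(2) by (simp add: mult.assoc)
  qed
  finally show ?thesis using False by (simp add: step_def o_def sum_upt_Suc del: upt_Suc)
qed

lemma step_V:
  assumes c: "cond2 q P f" and q: "q \<noteq> 0" and x: "ZI \<notin> set x" and z: "ZI \<notin> set z"
  shows "f (x @ V # nf k m @ z) = sum_list (map (\<lambda>(c,k',m'). c * f (x @ nf k' m' @ z)) (step q P V k m))"
proof (cases "k \<le> 0")
  case True
  have e: "nat (-(k-1)) = Suc (nat (-k))" using True by simp
  have h: "nf (k-1) m = V # nf k m"
  proof -
    have "nf (k-1) m = replicate (nat (-(k-1))) V @ replicate m Z" using True by (intro nf_neg) simp
    also have "\<dots> = V # (replicate (nat (-k)) V @ replicate m Z)" by (simp only: e replicate_Suc append_Cons)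
    also have "replicate (nat (-k)) V @ replicate m Z = nf k m" using True by (auto simp: nf_def)
    finally show ?thesis .
  qed
  have "sum_list (map (\<lambda>(c,k',m'). c * f (x @ nf k' m' @ z)) (step q P V k m)) = f (x @ nf (k-1) m @ z)"
    using True by (simp add: step_def)
  then show ?thesis unfolding h by simp
next
  case False
  define j where "j = nat k"
  have j: "j \<ge> 1" "k = int j" using False by (auto simp: j_def)
  have rj: "replicate j U = U # replicate (j-1) U" using j(1) by (cases j) auto
  have nfk: "nf k m = U # replicate (j-1) U @ replicate m Z"
    using False by (simp add: nf_pos j_def[symmetric] rj)
  have nfk1: "\<And>i. nf (k-1) (m+i) = replicate (j-1) U @ replicate (m+i) Z"
    using j by (simp add: nf_def nat_diff_distrib')
  have "f (x @ V # nf k m @ z) = f (x @ [V,U] @ (replicate (j-1) U @ replicate m Z @ z))"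
    by (simp add: nfk)
  also have "\<dots> = (\<Sum>i\<le>degree P. coeff P i * q ^ i * f (x @ replicate i Z @ (replicate (j-1) U @ replicate m Z @ z)))"
    using x z by (intro I_VU[OF c]) auto
  also have "\<dots> = (\<Sum>i\<le>degree P. coeff P i * q powi ((2*k-1) * int i) * f (x @ nf (k-1) (m+i) @ z))"
  proof (intro sum.cong refl)
    fix i
    have "f (x @ replicate i Z @ (replicate (j-1) U @ replicate m Z @ z))
        = (q^2)^(i*(j-1)) * f (x @ replicate (j-1) U @ replicate i Z @ (replicate m Z @ z))"
      using x z by (intro CZU[OF c]) auto
    also have "x @ replicate (j-1) U @ replicate i Z @ (replicate m Z @ z) = x @ nf (k-1) (m+i) @ z"
      by (simp add: nfk1 rep_Z_add)
    finally show "coeff P i * q ^ i * f (x @ replicate i Z @ (replicate (j-1) U @ replicate m Z @ z))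
        = coeff P i * q powi ((2*k-1) * int i) * f (x @ nf (k-1) (m+i) @ z)"
      using coefV[OF j(1), of q i] j(2) by (simp add: mult.assoc)
  qed
  finally show ?thesis using False by (simp add: step_def o_def sum_upt_Suc del: upt_Suc)
qed



lemma step_all:
  assumes c: "cond2 q P f" and q: "q \<noteq> 0" and x: "ZI \<notin> set x" and z: "ZI \<notin> set z" and g: "g \<noteq> ZI"
  shows "f (x @ g # nf k m @ z) = sum_list (map (\<lambda>(c,k',m'). c * f (x @ nf k' m' @ z)) (step q P g k m))"
  using g step_Z[OF c x z] step_U[OF c q x z] step_V[OF c q x z] by (cases g) auto

lemma sum_scale:
  fixes a :: complex and h :: "int \<Rightarrow> nat \<Rightarrow> complex"
  shows "sum_list (map (\<lambda>(c,k,m). c * h k m) (map (\<lambda>(c',k',m'). (a*c',k',m')) S)) = a * sum_list (map (\<lambda>(c,k,m). c * h k m) S)"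
  by (induction S) (auto simp: algebra_simps case_prod_beta o_def)

lemma sum_concat_step:
  fixes h :: "int \<Rightarrow> nat \<Rightarrow> complex"
  shows "sum_list (map (\<lambda>(c,k,m). c * h k m) (concat (map (\<lambda>(c,k,m). map (\<lambda>(c',k',m'). (c*c',k',m')) (S k m)) L)))
   = sum_list (map (\<lambda>(c,k,m). c * sum_list (map (\<lambda>(c',k',m'). c' * h k' m') (S k m))) L)"
proof (induction L)
  case Nil then show ?case by simp
next
  case (Cons p L)
  obtain c k m where p: "p = (c,k,m)" by (cases p) auto
  have "sum_list (map (\<lambda>(c,k,m). c * h k m) (map (\<lambda>(c',k',m'). (c*c',k',m')) (S k m))) = c * sum_list (map (\<lambda>(c',k',m'). c' * h k' m') (S k m))"
    by (rule sum_scale)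
  then show ?case using Cons by (simp add: p)
qed

lemma NF:
  assumes c: "cond2 q P f" and q: "q \<noteq> 0"
  shows "ZI \<notin> set x \<Longrightarrow> ZI \<notin> set w \<Longrightarrow> ZI \<notin> set z \<Longrightarrow>
    f (x @ w @ z) = sum_list (map (\<lambda>(c,k,m). c * f (x @ nf k m @ z)) (expand q P w))"
proof (induction w arbitrary: x)
  case Nil then show ?case by (simp add: nf_def)
next
  case (Cons g w)
  have "f (x @ (g # w) @ z) = f ((x @ [g]) @ w @ z)" by simp
  also have "\<dots> = sum_list (map (\<lambda>(c,k,m). c * f ((x @ [g]) @ nf k m @ z)) (expand q P w))"
    using Cons by (intro Cons.IH) auto
  also have "\<dots> = sum_list (map (\<lambda>(c,k,m). c * sum_list (map (\<lambda>(c',k',m'). c' * f (x @ nf k' m' @ z)) (step q P g k m))) (expand q P w))"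
  proof -
    have "\<And>k m. f ((x @ [g]) @ nf k m @ z) = sum_list (map (\<lambda>(c',k',m'). c' * f (x @ nf k' m' @ z)) (step q P g k m))"
      using Cons.prems by (simp, intro step_all[OF c q]) auto
    then show ?thesis by simp
  qed
  also have "\<dots> = sum_list (map (\<lambda>(c,k,m). c * f (x @ nf k m @ z)) (expand q P (g # w)))"
    by (simp only: expand.simps sum_concat_step)
  finally show ?case .
qed

lemma sum_last:
  fixes n :: nat
  assumes "\<And>i. i < n \<Longrightarrow> G i = 0"
  shows "(\<Sum>i\<le>n. c i * G i) = c n * (G n :: complex)"
proof -
  have e: "{..n} = insert n {..<n}" by auto
  have "(\<Sum>i\<le>n. c i * G i) = (\<Sum>i<n. c i * G i) + c n * G n"
    unfolding e by (subst sum.insert) auto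
  also have "(\<Sum>i<n. c i * G i) = 0" using assms by simp
  finally show ?thesis by simp
qed

lemma wdeg_simps: "wdeg [U] = 1" "wdeg [V] = -1" "wdeg [Z] = 0"
  by (auto simp: wdeg_def)



lemma t_contra:
  assumes q: "(q::complex) \<noteq> 0" and h: "inverse q ^ n = t * (q^2)^j * q^n"
  shows "t = inverse (q^(2*(j+n)))"
proof -
  have e: "2*(j+n) = 2*j + n + n" by simp
  have X: "q^(2*(j+n)) = (q^2)^j * q^n * q^n" by (simp only: e power_add power_mult)
  have "t * ((q^2)^j * q^n * q^n) = (t * (q^2)^j * q^n) * q^n" by (simp add: algebra_simps)
  also have "\<dots> = inverse q ^ n * q ^ n" using h by simp
  also have "\<dots> = 1" using q by (simp add: power_inverse)
  finally have "t * q^(2*(j+n)) = 1" using X by simp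
  then show ?thesis using q by (simp add: field_simps)
qed

lemma zero_Z:
  assumes c2: "cond2 q P g" and c3: "cond3 t g" and q: "q \<noteq> 0"
    and deg: "degree P = n" and n: "n \<ge> 1"
    and ht: "\<forall>k::nat. t \<noteq> inverse (q ^ (2 * k))"
    and z: "\<forall>i<n. g (replicate i Z) = 0"
  shows "g (replicate m Z) = 0"
proof (induction m rule: less_induct)
  case (less m)
  show ?case
  proof (cases "m < n")
    case True then show ?thesis using z by simp
  next
    case False
    define j where "j = m - n"
    have mj: "m = j + n" using False by (simp add: j_def)
    define G where "G i = g (replicate (i + j) Z)" for i
    have Gz: "\<And>i. i < n \<Longrightarrow> G i = 0" unfolding G_def using mj by (intro less.IH) simp
    have A: "g ([] @ [U,V] @ replicate j Z) = (\<Sum>i\<le>degree P. coeff P i * inverse q ^ i * g ([] @ replicate i Z @ replicate j Z))"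
      by (rule I_UV[OF c2]) auto
    have B: "g ([U] @ (V # replicate j Z)) = t powi wdeg [U] * g ((V # replicate j Z) @ [U])"
      by (rule cyc[OF c3]) auto
    have C: "g ([V] @ replicate j Z @ replicate 1 U @ []) = (q^2)^(j*1) * g ([V] @ replicate 1 U @ replicate j Z @ [])"
      by (rule CZU[OF c2]) auto
    have D: "g ([] @ [V,U] @ replicate j Z) = (\<Sum>i\<le>degree P. coeff P i * q ^ i * g ([] @ replicate i Z @ replicate j Z))"
      by (rule I_VU[OF c2]) auto
    have rr: "\<And>i. replicate i Z @ replicate j Z = replicate (i + j) Z" by (simp add: replicate_add)
    have "(\<Sum>i\<le>n. (coeff P i * inverse q ^ i) * G i) = t * (q^2)^j * (\<Sum>i\<le>n. (coeff P i * q ^ i) * G i)"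
      using A B C D by (simp add: wdeg_simps G_def rr deg mult.assoc)
    then have E: "coeff P n * inverse q ^ n * G n = t * (q^2)^j * (coeff P n * q ^ n * G n)"
      using sum_last[of n G, OF Gz] by simp
    have lc: "coeff P n \<noteq> 0" using deg n by (metis leading_coeff_0_iff le_0_eq not_one_le_zero degree_0)
    show ?thesis
    proof (rule ccontr)
      assume "g (replicate m Z) \<noteq> 0"
      then have Gn: "G n \<noteq> 0" by (simp add: G_def mj add.commute)
      have "inverse q ^ n = t * (q^2)^j * q^n"
        using E lc Gn by (simp add: algebra_simps)
      then have "t = inverse (q^(2*(j+n)))" by (rule t_contra[OF q])
      then show False using ht by blast
    qed
  qed
qed

lemma zero_nf:
  assumes c2: "cond2 q P g" and c3: "cond3 t g" and q: "q \<noteq> 0" and t: "t \<noteq> 0"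
    and deg: "degree P = n" and n: "n \<ge> 1"
    and ht: "\<forall>k::nat. t \<noteq> inverse (q ^ (2 * k))"
    and z: "\<forall>i<n. g (replicate i Z) = 0"
  shows "g (nf k m) = 0"
proof -
  consider "k = 0" | "k > 0" | "k < 0" by linarith
  then show ?thesis
  proof cases
    case 1 then show ?thesis using zero_Z[OF c2 c3 q deg n ht z] by (simp add: nf_def)
  next
    case 2
    define j where "j = nat k"
    have j: "j \<ge> 1" using 2 by (simp add: j_def)
    have rj: "replicate j U = U # replicate (j-1) U" using j by (cases j) auto
    have rj': "replicate (j-1) U @ [U] = replicate j U" using j by (cases j) (auto simp: replicate_append_same)
    have B: "g ([U] @ (replicate (j-1) U @ replicate m Z)) = t powi wdeg [U] * g ((replicate (j-1) U @ replicate m Z) @ [U])"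
      by (rule cyc[OF c3]) auto
    have C: "g (replicate (j-1) U @ replicate m Z @ replicate 1 U @ []) = (q^2)^(m*1) * g (replicate (j-1) U @ replicate 1 U @ replicate m Z @ [])"
      by (rule CZU[OF c2]) auto
    have nfk: "nf k m = replicate j U @ replicate m Z" using 2 by (simp add: nf_def j_def)
    have "g (nf k m) = t * (q^2)^m * g (nf k m)"
      using B C unfolding nfk by (simp add: wdeg_simps rj replicate_app_Cons_same mult.assoc)
    then show ?thesis
    proof (cases "g (nf k m) = 0")
      case False
      with \<open>g (nf k m) = t * (q^2)^m * g (nf k m)\<close> have "t * (q^2)^m = 1" by simp
      then have "inverse ((q^2)^m) = t" by (intro inverse_unique) (simp add: mult.commute)
      then have "t = inverse (q^(2*m))" by (simp add: power_mult)
      then show ?thesis using ht by blast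
    qed simp
  next
    case 3
    define j where "j = nat (-k)"
    have j: "j \<ge> 1" using 3 by (simp add: j_def)
    have rj: "replicate j V = V # replicate (j-1) V" using j by (cases j) auto
    have rj': "replicate (j-1) V @ [V] = replicate j V" using j by (cases j) (auto simp: replicate_append_same)
    have B: "g ([V] @ (replicate (j-1) V @ replicate m Z)) = t powi wdeg [V] * g ((replicate (j-1) V @ replicate m Z) @ [V])"
      by (rule cyc[OF c3]) auto
    have C: "g (replicate (j-1) V @ replicate m Z @ replicate 1 V @ []) = (inverse (q^2))^(m*1) * g (replicate (j-1) V @ replicate 1 V @ replicate m Z @ [])"
      by (rule CZV[OF c2]) auto
    have nfk: "nf k m = replicate j V @ replicate m Z" using 3 by (simp add: nf_def j_def)
    have "g (nf k m) = inverse t * (inverse (q^2))^m * g (nf k m)"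
      using B C unfolding nfk by (simp add: wdeg_simps rj replicate_app_Cons_same mult.assoc)
    then show ?thesis
    proof (cases "g (nf k m) = 0")
      case False
      with \<open>g (nf k m) = inverse t * (inverse (q^2))^m * g (nf k m)\<close> have "inverse t * (inverse (q^2))^m = 1" by simp
      then have "inverse (t * (q^2)^m) = 1" by (simp only: power_inverse inverse_mult_distrib)
      then have "t * (q^2)^m = 1" by (metis inverse_1 inverse_inverse_eq)
      then have "inverse ((q^2)^m) = t" by (intro inverse_unique) (simp add: mult.commute)
      then have "t = inverse (q^(2*m))" by (simp add: power_mult)
      then show ?thesis using ht by blast
    qed simp
  qed
qed

lemma sum_list_zero: "(\<And>p. p \<in> set L \<Longrightarrow> F p = 0) \<Longrightarrow> sum_list (map F L) = (0::complex)"
  by (induction L) auto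

lemma zero_all:
  assumes c1: "\<forall>w. ZI \<in> set w \<longrightarrow> g w = 0"
    and c2: "cond2 q P g" and c3: "cond3 t g" and q: "q \<noteq> 0" and t: "t \<noteq> 0"
    and deg: "degree P = n" and n: "n \<ge> 1"
    and ht: "\<forall>k::nat. t \<noteq> inverse (q ^ (2 * k))"
    and z: "\<forall>i<n. g (replicate i Z) = 0"
  shows "g w = 0"
proof (cases "ZI \<in> set w")
  case True then show ?thesis using c1 by simp
next
  case False
  have "g ([] @ w @ []) = sum_list (map (\<lambda>(c,k,m). c * g ([] @ nf k m @ [])) (expand q P w))"
    using False by (intro NF[OF c2 q]) auto
  also have "\<dots> = 0"
    by (rule sum_list_zero) (use zero_nf[OF c2 c3 q t deg n ht z] in auto)
  finally show ?thesis by simp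
qed



type_synonym vec = "int \<Rightarrow> int \<Rightarrow> complex"

definition opZ :: "complex \<Rightarrow> vec \<Rightarrow> vec" where
  "opZ q v k m = q powi (2*k) * v k (m-1)"
definition opZI :: "complex \<Rightarrow> vec \<Rightarrow> vec" where
  "opZI q v k m = q powi (-(2*k)) * v k (m+1)"
definition opU :: "complex \<Rightarrow> complex poly \<Rightarrow> vec \<Rightarrow> vec" where
  "opU q P v k m = (if 1 \<le> k then v (k-1) m
     else (\<Sum>i\<le>degree P. coeff P i * q powi ((2*k-1) * int i) * v (k-1) (m - int i)))"
definition opV :: "complex \<Rightarrow> complex poly \<Rightarrow> vec \<Rightarrow> vec" where
  "opV q P v k m = (if k \<le> -1 then v (k+1) m
     else (\<Sum>i\<le>degree P. coeff P i * q powi ((2*k+1) * int i) * v (k+1) (m - int i)))"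

fun opg :: "complex \<Rightarrow> complex poly \<Rightarrow> gen \<Rightarrow> vec \<Rightarrow> vec" where
  "opg q P U = opU q P"
| "opg q P V = opV q P"
| "opg q P Z = opZ q"
| "opg q P ZI = opZI q"

fun rep :: "complex \<Rightarrow> complex poly \<Rightarrow> word \<Rightarrow> vec \<Rightarrow> vec" where
  "rep q P [] v = v"
| "rep q P (g # w) v = opg q P g (rep q P w v)"

lemma rep_append: "rep q P (x @ y) v = rep q P x (rep q P y v)"
  by (induction x) auto

lemma opg_add: "opg q P g (\<lambda>k m. a k m + b k m) k m = opg q P g a k m + opg q P g b k m"
  by (cases g) (auto simp: opU_def opV_def opZ_def opZI_def algebra_simps sum.distrib)

lemma opg_scale: "opg q P g (\<lambda>k m. c * a k m) k m = c * opg q P g a k m"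
  by (cases g) (auto simp: opU_def opV_def opZ_def opZI_def algebra_simps sum_distrib_left)

lemma opg_zero: "opg q P g (\<lambda>k m. 0) k m = 0"
  using opg_scale[of q P g 0 "\<lambda>k m. 0" k m] by simp

lemma opg_sum:
  assumes "finite S"
  shows "opg q P g (\<lambda>k m. \<Sum>j\<in>S. c j * h j k m) k m = (\<Sum>j\<in>S. c j * opg q P g (h j) k m)"
  using assms
proof (induction S arbitrary: k m rule: finite_induct)
  case empty then show ?case by (simp add: opg_zero)
next
  case (insert x F)
  then show ?case by (simp add: opg_add opg_scale)
qed

lemma rep_sum:
  assumes "finite S"
  shows "rep q P x (\<lambda>k m. \<Sum>j\<in>S. c j * h j k m) k m = (\<Sum>j\<in>S. c j * rep q P x (h j) k m)"
proof (induction x arbitrary: k m)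
  case Nil then show ?case by simp
next
  case (Cons g x)
  have "rep q P (g # x) (\<lambda>k m. \<Sum>j\<in>S. c j * h j k m) k m = opg q P g (\<lambda>k m. \<Sum>j\<in>S. c j * rep q P x (h j) k m) k m"
  proof -
    have e: "rep q P x (\<lambda>k m. \<Sum>j\<in>S. c j * h j k m) = (\<lambda>k m. \<Sum>j\<in>S. c j * rep q P x (h j) k m)"
      by (intro ext) (rule Cons.IH)
    show ?thesis by (simp add: e)
  qed
  also have "\<dots> = (\<Sum>j\<in>S. c j * opg q P g (rep q P x (h j)) k m)"
    by (rule opg_sum[OF assms])
  finally show ?case by simp
qed

lemma opg_sum_list:
  "opg q P g (\<lambda>k m. sum_list (map (\<lambda>p. F p k m) L)) k m = sum_list (map (\<lambda>p. opg q P g (F p) k m) L)"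
proof (induction L arbitrary: k m)
  case Nil then show ?case by (simp add: opg_zero)
next
  case (Cons p L)
  then show ?case by (simp add: opg_add)
qed



lemma pwa: "(q::complex) \<noteq> 0 \<Longrightarrow> q powi a * q powi b = q powi (a + b)"
  by (simp add: power_int_add)

lemma pw_eq: "(q::complex) \<noteq> 0 \<Longrightarrow> a + b = c \<Longrightarrow> q powi a * q powi b = q powi c"
proof -
  assume q: "q \<noteq> 0" and h: "a + b = c"
  have "q powi (a+b) = q powi a * q powi b" using q by (simp add: power_int_add)
  then show ?thesis using h by simp
qed

lemma rep_Zpow:
  assumes q: "q \<noteq> 0"
  shows "rep q P (replicate i Z) v k m = q powi (2*k*int i) * v k (m - int i)"
proof (induction i arbitrary: m)
  case 0 then show ?case by simp
next
  case (Suc i)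
  have "rep q P (replicate (Suc i) Z) v k m = q powi (2*k) * (q powi (2*k*int i) * v k (m - 1 - int i))"
    using Suc by (simp add: opZ_def)
  also have "\<dots> = (q powi (2*k) * q powi (2*k*int i)) * v k (m - 1 - int i)" by (simp add: mult.assoc)
  also have "q powi (2*k) * q powi (2*k*int i) = q powi (2*k*int (Suc i))"
    using q by (simp add: pwa algebra_simps)
  finally show ?case by (simp add: algebra_simps)
qed

lemma rel_ZZI: "q \<noteq> 0 \<Longrightarrow> opZ q (opZI q v) k m = v k m"
  by (simp add: opZ_def opZI_def mult.assoc[symmetric] pwa)

lemma rel_ZIZ: "q \<noteq> 0 \<Longrightarrow> opZI q (opZ q v) k m = v k m"
  by (simp add: opZ_def opZI_def mult.assoc[symmetric] pwa)

lemma rel_ZU: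
  assumes q: "q \<noteq> 0"
  shows "opZ q (opU q P (opZI q v)) k m = q^2 * opU q P v k m"
proof -
  have e': "q powi (2*k) * q powi (2 - 2*k) = q^2" using q by (subst pw_eq) auto
  have e2: "\<And>A B. q powi (2*k) * (A * (q powi (2 - 2*k) * B)) = q^2 * (A * B)"
    by (simp add: e'[symmetric] algebra_simps)
  show ?thesis
  proof (cases "1 \<le> k")
    case True
    show ?thesis using True by (simp add: opZ_def opU_def opZI_def mult.assoc[symmetric] e')
  next
    case False
    then show ?thesis by (simp add: opZ_def opU_def opZI_def sum_distrib_left e2)
  qed
qed

lemma rel_ZV:
  assumes q: "q \<noteq> 0"
  shows "opZ q (opV q P (opZI q v)) k m = inverse (q^2) * opV q P v k m"
proof -
  have e': "q powi (2*k) * q powi (- (2*k) - 2) = inverse (q^2)" using q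
    by (subst pw_eq[where c="-2"]) (auto simp: power_int_minus)
  have e2: "\<And>A B. q powi (2*k) * (A * (q powi (- (2*k) - 2) * B)) = inverse (q^2) * (A * B)"
    by (simp add: e'[symmetric] algebra_simps)
  show ?thesis
  proof (cases "k \<le> -1")
    case True
    show ?thesis using True by (simp add: opZ_def opV_def opZI_def mult.assoc[symmetric] e')
  next
    case False
    then show ?thesis by (simp add: opZ_def opV_def opZI_def sum_distrib_left e2)
  qed
qed

lemma cU: "(q::complex) \<noteq> 0 \<Longrightarrow> q powi ((2*k-1)*int i) = inverse q ^ i * q powi (2*k*int i)"
proof -
  assume q: "q \<noteq> 0"
  have "inverse q ^ i = q powi (- int i)" by (simp add: power_int_minus power_inverse)
  moreover have "q powi (- int i) * q powi (2*k*int i) = q powi ((2*k-1)*int i)"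
    using q by (rule pw_eq) (simp add: algebra_simps)
  ultimately show ?thesis by simp
qed

lemma cV: "(q::complex) \<noteq> 0 \<Longrightarrow> q powi ((2*k+1)*int i) = q ^ i * q powi (2*k*int i)"
proof -
  assume q: "q \<noteq> 0"
  have "q ^ i = q powi (int i)" by simp
  moreover have "q powi (int i) * q powi (2*k*int i) = q powi ((2*k+1)*int i)"
    using q by (rule pw_eq) (simp add: algebra_simps)
  ultimately show ?thesis by simp
qed

lemma rel_UV:
  assumes q: "q \<noteq> 0"
  shows "opU q P (opV q P v) k m = (\<Sum>i\<le>degree P. coeff P i * inverse q ^ i * rep q P (replicate i Z) v k m)"
proof -
  have R: "(\<Sum>i\<le>degree P. coeff P i * inverse q ^ i * rep q P (replicate i Z) v k m)
     = (\<Sum>i\<le>degree P. coeff P i * q powi ((2*k-1)*int i) * v k (m - int i))"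
    unfolding rep_Zpow[OF q] cU[OF q] by (simp add: mult.assoc)
  show ?thesis
  proof (cases "1 \<le> k")
    case True
    have "opU q P (opV q P v) k m = (\<Sum>i\<le>degree P. coeff P i * q powi ((2*(k-1)+1)*int i) * v (k-1+1) (m - int i))"
      using True by (simp add: opU_def opV_def)
    also have "(2*(k-1)+1) = 2*k-1" by simp
    finally show ?thesis unfolding R by simp
  next
    case False
    have "opU q P (opV q P v) k m = (\<Sum>i\<le>degree P. coeff P i * q powi ((2*k-1)*int i) * v (k-1+1) (m - int i))"
      using False by (simp add: opU_def opV_def)
    then show ?thesis unfolding R by simp
  qed
qed

lemma rel_VU:
  assumes q: "q \<noteq> 0"
  shows "opV q P (opU q P v) k m = (\<Sum>i\<le>degree P. coeff P i * q ^ i * rep q P (replicate i Z) v k m)"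
proof -
  have R: "(\<Sum>i\<le>degree P. coeff P i * q ^ i * rep q P (replicate i Z) v k m)
     = (\<Sum>i\<le>degree P. coeff P i * q powi ((2*k+1)*int i) * v k (m - int i))"
    unfolding rep_Zpow[OF q] cV[OF q] by (simp add: mult.assoc)
  show ?thesis
  proof (cases "k \<le> -1")
    case True
    have "opV q P (opU q P v) k m = (\<Sum>i\<le>degree P. coeff P i * q powi ((2*(k+1)-1)*int i) * v (k+1-1) (m - int i))"
      using True by (simp add: opU_def opV_def)
    also have "(2*(k+1)-1) = 2*k+1" by simp
    finally show ?thesis unfolding R by simp
  next
    case False
    have "opV q P (opU q P v) k m = (\<Sum>i\<le>degree P. coeff P i * q powi ((2*k+1)*int i) * v (k+1-1) (m - int i))"
      using False by (simp add: opU_def opV_def)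
    then show ?thesis unfolding R by simp
  qed
qed



lemma rep_zero: "rep q P x (\<lambda>k m. 0) k m = 0"
  using rep_sum[of "{}" q P x "\<lambda>_. 0" "\<lambda>_ _ _. 0" k m] by simp

lemma ideal_rep:
  assumes "a \<in> rel_ideal q P" and q: "q \<noteq> 0"
  shows "fin_supp a \<and> (\<forall>v k m. ext (\<lambda>w. rep q P w v k m) a = 0)"
  using assms(1)
proof induction
  case (gen r)
  have fs: "fin_supp r" using gen
    by (auto simp: rels_def intro!: fin_supp_esub fin_supp_mono fin_supp_scal fin_supp_Pat)
  have "ext (\<lambda>w. rep q P w v k m) r = 0" for v k m
    using gen q by (auto simp: rels_def ext_esub ext_scal ext_mono ext_Pat fin_supp_esub fin_supp_mono
        fin_supp_scal fin_supp_Pat rel_ZZI rel_ZIZ rel_ZU rel_ZV rel_UV rel_VU)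
  then show ?case using fs by blast
next
  case (add a b)
  then show ?case by (simp add: fin_supp_eadd ext_eadd)
next
  case (scal a c)
  then show ?case by (simp add: fin_supp_scal ext_scal)
next
  case (left a x)
  have fa: "fin_supp a" using left by simp
  have "ext (\<lambda>w. rep q P w v k m) (fmul (mono x) a) = 0" for v k m
  proof -
    have "ext (\<lambda>w. rep q P w v k m) (fmul (mono x) a) = ext (\<lambda>w. rep q P x (rep q P w v) k m) a"
      by (simp add: ext_fmul_mono_left[OF fa] rep_append)
    also have "\<dots> = (\<Sum>w\<in>supp a. a w * rep q P x (rep q P w v) k m)" by (simp add: ext_def)
    also have "\<dots> = rep q P x (\<lambda>k m. \<Sum>w\<in>supp a. a w * rep q P w v k m) k m"
      using fa by (simp add: rep_sum fin_supp_def)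
    also have "(\<lambda>k m. \<Sum>w\<in>supp a. a w * rep q P w v k m) = (\<lambda>k m. 0)"
      using left by (auto simp: ext_def)
    finally show ?thesis by (simp add: rep_zero)
  qed
  then show ?case using fa by (simp add: fin_supp_fmul fin_supp_mono)
next
  case (right a x)
  have fa: "fin_supp a" using right by simp
  have "ext (\<lambda>w. rep q P w v k m) (fmul a (mono x)) = 0" for v k m
    using right by (simp add: ext_fmul_mono_right[OF fa] rep_append)
  then show ?case using fa by (simp add: fin_supp_fmul fin_supp_mono)
qed

definition evec :: "int \<Rightarrow> nat \<Rightarrow> vec" where
  "evec k0 m0 = (\<lambda>k m. if k = k0 \<and> m = int m0 then 1 else 0)"

lemma opg_evec:
  assumes g: "g \<noteq> ZI"
  shows "opg q P g (evec k0 m0) k m = sum_list (map (\<lambda>(c',k',m'). c' * evec k' m' k m) (step q P g k0 m0))"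
proof (cases g)
  case U
  show ?thesis
  proof (cases "0 \<le> k0")
    case True then show ?thesis using U by (auto simp: opU_def step_def evec_def)
  next
    case False
    show ?thesis
    proof (cases "k = k0 + 1")
      case True
      then show ?thesis using U False
        by (auto simp: opU_def step_def evec_def sum_upt_Suc o_def algebra_simps intro!: sum.cong simp del: upt_Suc)
    next
      case False2: False
      then show ?thesis using U False
        by (auto simp: opU_def step_def evec_def sum_upt_Suc o_def simp del: upt_Suc)
    qed
  qed
next
  case V
  show ?thesis
  proof (cases "k0 \<le> 0")
    case True then show ?thesis using V by (auto simp: opV_def step_def evec_def)
  next
    case False
    show ?thesis
    proof (cases "k = k0 - 1")
      case True
      then show ?thesis using V False
        by (auto simp: opV_def step_def evec_def sum_upt_Suc o_def algebra_simps intro!: sum.cong simp del: upt_Suc)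
    next
      case False2: False
      then show ?thesis using V False
        by (auto simp: opV_def step_def evec_def sum_upt_Suc o_def simp del: upt_Suc)
    qed
  qed
next
  case Z
  then show ?thesis by (auto simp: opZ_def step_def evec_def)
qed (use g in simp)



lemma rep_link:
  "ZI \<notin> set w \<Longrightarrow> rep q P w (evec 0 0) k m = sum_list (map (\<lambda>(c,k0,m0). c * evec k0 m0 k m) (expand q P w))"
proof (induction w arbitrary: k m)
  case Nil then show ?case by simp
next
  case (Cons g w)
  have g: "g \<noteq> ZI" and w: "ZI \<notin> set w" using Cons.prems by auto
  have e: "rep q P w (evec 0 0) = (\<lambda>k m. sum_list (map (\<lambda>p. (\<lambda>k m. fst p * evec (fst (snd p)) (snd (snd p)) k m) k m) (expand q P w)))"
    using Cons.IH[OF w] by (intro ext) (simp add: case_prod_beta)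
  have "rep q P (g # w) (evec 0 0) k m = opg q P g (rep q P w (evec 0 0)) k m" by simp
  also have "\<dots> = sum_list (map (\<lambda>p. opg q P g (\<lambda>k m. fst p * evec (fst (snd p)) (snd (snd p)) k m) k m) (expand q P w))"
    unfolding e by (rule opg_sum_list)
  also have "\<dots> = sum_list (map (\<lambda>(c,k0,m0). c * sum_list (map (\<lambda>(c',k',m'). c' * evec k' m' k m) (step q P g k0 m0))) (expand q P w))"
    by (intro arg_cong[where f=sum_list] map_cong refl) (auto simp: opg_scale opg_evec[OF g])
  also have "\<dots> = sum_list (map (\<lambda>(c,k0,m0). c * evec k0 m0 k m) (expand q P (g # w)))"
    by (simp only: expand.simps sum_concat_step)
  finally show ?case .
qed

definition phi :: "complex \<Rightarrow> complex poly \<Rightarrow> (nat \<Rightarrow> complex) \<Rightarrow> word \<Rightarrow> complex" where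
  "phi q P tau w = sum_list (map (\<lambda>(c,k0,m0). c * (if k0 = 0 then tau m0 else 0)) (expand q P w))"

definition fT :: "complex \<Rightarrow> complex poly \<Rightarrow> (nat \<Rightarrow> complex) \<Rightarrow> word \<Rightarrow> complex" where
  "fT q P tau w = (if ZI \<in> set w then 0 else phi q P tau w)"

lemma phi_as:
  assumes M: "finite M" and L: "\<forall>p\<in>set L. snd (snd p) \<in> M"
  shows "sum_list (map (\<lambda>(c,k0,m0). c * (if k0 = 0 then tau m0 else 0)) L)
       = (\<Sum>m\<in>M. tau m * sum_list (map (\<lambda>(c,k0,m0). c * evec k0 m0 0 (int m)) L))"
  using L
proof (induction L)
  case Nil then show ?case by simp
next
  case (Cons p L)
  obtain c k0 m0 where p: "p = (c,k0,m0)" by (cases p) auto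
  have m0: "m0 \<in> M" using Cons.prems p by auto
  have "(\<Sum>m\<in>M. tau m * sum_list (map (\<lambda>(c,k0,m0). c * evec k0 m0 0 (int m)) (p # L)))
      = (\<Sum>m\<in>M. tau m * (c * evec k0 m0 0 (int m))) + (\<Sum>m\<in>M. tau m * sum_list (map (\<lambda>(c,k0,m0). c * evec k0 m0 0 (int m)) L))"
    by (simp add: p distrib_left sum.distrib)
  also have "(\<Sum>m\<in>M. tau m * (c * evec k0 m0 0 (int m))) = (\<Sum>m\<in>M. if m = m0 then c * (if k0 = 0 then tau m0 else 0) else 0)"
    by (intro sum.cong refl) (auto simp: evec_def)
  also have "\<dots> = c * (if k0 = 0 then tau m0 else 0)" using M m0 by simp
  finally show ?case using Cons by (simp add: p)
qed

lemma fT_vanish: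
  assumes q: "q \<noteq> 0" and a: "Fplus a" "a \<in> rel_ideal q P"
  shows "ext (fT q P tau) a = 0"
proof -
  have fa: "finite (supp a)" using a by (simp add: Fplus_def fin_supp_def)
  have zf: "\<And>w. w \<in> supp a \<Longrightarrow> ZI \<notin> set w" using a by (auto simp: Fplus_def)
  define M where "M = (\<Union>w\<in>supp a. (\<lambda>p. snd (snd p)) ` set (expand q P w))"
  have fM: "finite M" using fa by (simp add: M_def)
  have van: "\<And>m. (\<Sum>w\<in>supp a. a w * rep q P w (evec 0 0) 0 (int m)) = 0"
    using ideal_rep[OF a(2) q] by (simp add: ext_def)
  have "ext (fT q P tau) a = (\<Sum>w\<in>supp a. a w * (\<Sum>m\<in>M. tau m * rep q P w (evec 0 0) 0 (int m)))"
    unfolding ext_def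
  proof (intro sum.cong refl)
    fix w assume w: "w \<in> supp a"
    have "fT q P tau w = phi q P tau w" using zf[OF w] by (simp add: fT_def)
    also have "\<dots> = (\<Sum>m\<in>M. tau m * sum_list (map (\<lambda>(c,k0,m0). c * evec k0 m0 0 (int m)) (expand q P w)))"
      unfolding phi_def using w by (intro phi_as[OF fM]) (auto simp: M_def)
    also have "\<dots> = (\<Sum>m\<in>M. tau m * rep q P w (evec 0 0) 0 (int m))"
      using zf[OF w] by (simp add: rep_link)
    finally show "a w * fT q P tau w = a w * (\<Sum>m\<in>M. tau m * rep q P w (evec 0 0) 0 (int m))" by simp
  qed
  also have "\<dots> = (\<Sum>m\<in>M. tau m * (\<Sum>w\<in>supp a. a w * rep q P w (evec 0 0) 0 (int m)))"
    by (simp add: sum_distrib_left sum.swap[of _ "supp a"] algebra_simps)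
  also have "\<dots> = 0" by (simp add: van)
  finally show ?thesis .
qed

lemma fT_cond2: "q \<noteq> 0 \<Longrightarrow> cond2 q P (fT q P tau)"
  by (auto simp: cond2_def fT_vanish)



function tau :: "complex list \<Rightarrow> complex \<Rightarrow> complex \<Rightarrow> complex poly \<Rightarrow> nat \<Rightarrow> complex" where
  "tau xs q t P m = (if m < degree P then xs ! m else
     (\<Sum>i<degree P. coeff P i * (t * (q^2)^(m - degree P) * q^i - inverse q ^ i) * tau xs q t P (m - degree P + i)) /
     (coeff P (degree P) * (inverse q ^ degree P - t * (q^2)^(m - degree P) * q ^ degree P)))"
  by pat_completeness auto
termination by (relation "measure (\<lambda>(xs,q,t,P,m). m)") auto

declare tau.simps[simp del]

lemma tau_small: "m < degree P \<Longrightarrow> tau xs q t P m = xs ! m"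
  by (subst tau.simps) simp

lemma tau_rec:
  assumes q: "q \<noteq> 0" and deg: "degree P = n" and n: "n \<ge> 1"
    and ht: "\<forall>k::nat. t \<noteq> inverse (q ^ (2 * k))"
  shows "(\<Sum>i\<le>n. coeff P i * inverse q ^ i * tau xs q t P (j+i))
       = t * (q^2)^j * (\<Sum>i\<le>n. coeff P i * q ^ i * tau xs q t P (j+i))"
proof -
  let ?T = "tau xs q t P"
  define N where "N = (\<Sum>i<n. coeff P i * (t * (q^2)^j * q^i - inverse q ^ i) * ?T (j + i))"
  define D where "D = coeff P n * (inverse q ^ n - t * (q^2)^j * q ^ n)"
  have lc: "coeff P n \<noteq> 0" using deg n by (metis leading_coeff_0_iff le_0_eq not_one_le_zero degree_0)
  have D0: "D \<noteq> 0"
  proof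
    assume "D = 0"
    then have "inverse q ^ n = t * (q^2)^j * q ^ n" using lc by (simp add: D_def)
    then have "t = inverse (q^(2*(j+n)))" by (rule t_contra[OF q])
    then show False using ht by blast
  qed
  have "?T (j + n) = N / D"
    by (subst tau.simps) (simp add: deg N_def D_def add.commute)
  then have TD: "?T (j + n) * D = N" using D0 by simp
  have "(\<Sum>i\<le>n. coeff P i * inverse q ^ i * ?T (j+i)) - t * (q^2)^j * (\<Sum>i\<le>n. coeff P i * q ^ i * ?T (j+i))
      = (\<Sum>i\<le>n. coeff P i * (inverse q ^ i - t * (q^2)^j * q^i) * ?T (j+i))"
    by (simp add: sum_distrib_left sum_subtractf[symmetric] algebra_simps)
  also have "\<dots> = (\<Sum>i<n. coeff P i * (inverse q ^ i - t * (q^2)^j * q^i) * ?T (j+i)) + D * ?T (j+n)"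
  proof -
    have e: "{..n} = insert n {..<n}" by auto
    show ?thesis unfolding e by (subst sum.insert) (auto simp: D_def)
  qed
  also have "(\<Sum>i<n. coeff P i * (inverse q ^ i - t * (q^2)^j * q^i) * ?T (j+i)) = - N"
    by (simp add: N_def sum_negf[symmetric] algebra_simps)
  finally show ?thesis using TD by (simp add: algebra_simps)
qed

lemma expand_Zpow: "expand q P (replicate m Z) = [(1, 0, m)]"
  by (induction m) (auto simp: step_def)

lemma expand_Upow: "expand q P (replicate j U @ replicate m Z) = [(1, int j, m)]"
  by (induction j) (auto simp: step_def expand_Zpow)

lemma expand_Vpow: "expand q P (replicate j V @ replicate m Z) = [(1, - int j, m)]"
  by (induction j) (auto simp: step_def expand_Zpow)

lemma expand_nf: "expand q P (nf k m) = [(1, k, m)]"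
  by (cases "0 \<le> k") (auto simp: nf_def expand_Upow expand_Vpow)

lemma fT_nf: "fT q P tv (nf k m) = (if k = 0 then tv m else 0)"
  by (simp add: fT_def nf_ZI phi_def expand_nf)

lemma fT_Zpow: "fT q P tv (replicate m Z) = tv m"
  using fT_nf[of q P tv 0 m] by (simp add: nf_def)



lemma nf_snoc_Z: "nf k m @ [Z] = nf k (Suc m)"
  by (simp add: nf_def replicate_append_same)

lemma trZ:
  assumes q: "q \<noteq> 0"
  shows "fT q P tv (Z # nf k m) = fT q P tv (nf k m @ [Z])"
proof -
  have c: "cond2 q P (fT q P tv)" using q by (rule fT_cond2)
  have "fT q P tv ([] @ Z # nf k m @ []) = sum_list (map (\<lambda>(c,k',m'). c * fT q P tv ([] @ nf k' m' @ [])) (step q P Z k m))"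
    by (rule step_Z[OF c]) auto
  then show ?thesis by (auto simp: step_def nf_snoc_Z fT_nf)
qed

lemma sum_zero_if:
  "(\<And>i. i \<le> n \<Longrightarrow> G i = (0::complex)) \<Longrightarrow> (\<Sum>i\<le>n. c i * G i) = 0"
  by simp

lemma trU:
  assumes q: "q \<noteq> 0" and deg: "degree P = n"
    and rec: "\<And>j. (\<Sum>i\<le>n. coeff P i * inverse q ^ i * tv (j+i)) = t * (q^2)^j * (\<Sum>i\<le>n. coeff P i * q ^ i * tv (j+i))"
  shows "fT q P tv (U # nf k m) = t * fT q P tv (nf k m @ [U])"
proof -
  let ?f = "fT q P tv"
  have c: "cond2 q P ?f" using q by (rule fT_cond2)
  have L: "?f ([] @ U # nf k m @ []) = sum_list (map (\<lambda>(c,k',m'). c * ?f ([] @ nf k' m' @ [])) (step q P U k m))"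
    by (rule step_U[OF c q]) auto
  define pre where "pre = (if 0 \<le> k then replicate (nat k) U else replicate (nat (-k)) V)"
  have pre: "ZI \<notin> set pre" by (auto simp: pre_def)
  have nfp: "nf k m = pre @ replicate m Z" by (simp add: nf_def pre_def)
  have R: "?f (pre @ replicate m Z @ replicate 1 U @ []) = (q^2)^(m*1) * ?f (pre @ replicate 1 U @ replicate m Z @ [])"
    by (rule CZU[OF c pre]) auto
  show ?thesis
  proof (cases "0 \<le> k")
    case True
    have "pre @ [U] = replicate (nat (k+1)) U" using True
      by (simp add: pre_def nat_add_distrib replicate_append_same)
    then have "pre @ U # replicate m Z = nf (k+1) m" using True by (simp add: nf_def)
    then show ?thesis using L R True by (simp add: nfp step_def fT_nf)
  next
    case False
    define j where "j = nat (-k)"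
    have j: "j \<ge> 1" "k = - int j" using False by (auto simp: j_def)
    obtain j' where j': "j = Suc j'" using j(1) by (cases j) auto
    have pj: "pre = replicate j' V @ [V]" using False
      by (simp add: pre_def j_def[symmetric] j' replicate_append_same)
    have R2: "?f (replicate j' V @ [V,U] @ replicate m Z) = (\<Sum>i\<le>degree P. coeff P i * q ^ i * ?f (replicate j' V @ replicate i Z @ replicate m Z))"
      by (rule I_VU[OF c]) auto
    have nfi: "\<And>i. replicate j' V @ replicate i Z @ replicate m Z = nf (k+1) (m+i)"
      using j j' by (simp add: nf_def rep_Z_add[where z="[]", simplified] nat_diff_distrib')
    have RR: "?f (nf k m @ [U]) = (q^2)^m * (\<Sum>i\<le>n. coeff P i * q ^ i * ?f (nf (k+1) (m+i)))"
      using R R2 by (simp add: nfp pj nfi deg)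
    have LL: "?f (U # nf k m) = (\<Sum>i\<le>n. coeff P i * q powi ((2*k+1) * int i) * ?f (nf (k+1) (m+i)))"
      using L False by (simp add: step_def o_def sum_upt_Suc deg del: upt_Suc)
    show ?thesis
    proof (cases "k = -1")
      case True
      have e: "\<And>i. q powi ((2*k+1) * int i) = inverse q ^ i"
        using True by (simp add: power_int_minus power_inverse)
      have e': "\<And>i. q powi (- int i) = inverse q ^ i" by (simp add: power_int_minus power_inverse)
      show ?thesis unfolding LL RR using True rec[of m] by (simp add: fT_nf e e' mult.assoc add.commute)
    next
      case False
      then show ?thesis unfolding LL RR by (simp add: fT_nf)
    qed
  qed
qed

lemma trV:
  assumes q: "q \<noteq> 0" and t: "t \<noteq> 0" and deg: "degree P = n"
    and rec: "\<And>j. (\<Sum>i\<le>n. coeff P i * inverse q ^ i * tv (j+i)) = t * (q^2)^j * (\<Sum>i\<le>n. coeff P i * q ^ i * tv (j+i))"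
  shows "fT q P tv (V # nf k m) = inverse t * fT q P tv (nf k m @ [V])"
proof -
  let ?f = "fT q P tv"
  have c: "cond2 q P ?f" using q by (rule fT_cond2)
  have L: "?f ([] @ V # nf k m @ []) = sum_list (map (\<lambda>(c,k',m'). c * ?f ([] @ nf k' m' @ [])) (step q P V k m))"
    by (rule step_V[OF c q]) auto
  define pre where "pre = (if 0 \<le> k then replicate (nat k) U else replicate (nat (-k)) V)"
  have pre: "ZI \<notin> set pre" by (auto simp: pre_def)
  have nfp: "nf k m = pre @ replicate m Z" by (simp add: nf_def pre_def)
  have R: "?f (pre @ replicate m Z @ replicate 1 V @ []) = (inverse (q^2))^(m*1) * ?f (pre @ replicate 1 V @ replicate m Z @ [])"
    by (rule CZV[OF c pre]) auto
  show ?thesis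
  proof (cases "k \<le> 0")
    case True
    have e1: "nat (1-k) = Suc (nat (-k))" using True by simp
    have "pre @ [V] = replicate (nat (-(k-1))) V" using True
      by (cases "k = 0") (auto simp: pre_def e1 replicate_append_same)
    then have "pre @ V # replicate m Z = nf (k-1) m" using True by (simp add: nf_def)
    then show ?thesis using L R True by (simp add: nfp step_def fT_nf)
  next
    case False
    define j where "j = nat k"
    have j: "j \<ge> 1" "k = int j" using False by (auto simp: j_def)
    obtain j' where j': "j = Suc j'" using j(1) by (cases j) auto
    have pj: "pre = replicate j' U @ [U]" using False
      by (simp add: pre_def j_def[symmetric] j' replicate_append_same)
    have R2: "?f (replicate j' U @ [U,V] @ replicate m Z) = (\<Sum>i\<le>degree P. coeff P i * inverse q ^ i * ?f (replicate j' U @ replicate i Z @ replicate m Z))"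
      by (rule I_UV[OF c]) auto
    have nfi: "\<And>i. replicate j' U @ replicate i Z @ replicate m Z = nf (k-1) (m+i)"
      using j j' by (simp add: nf_def rep_Z_add[where z="[]", simplified] nat_diff_distrib')
    have RR: "?f (nf k m @ [V]) = (inverse (q^2))^m * (\<Sum>i\<le>n. coeff P i * inverse q ^ i * ?f (nf (k-1) (m+i)))"
      using R R2 by (simp add: nfp pj nfi deg)
    have LL: "?f (V # nf k m) = (\<Sum>i\<le>n. coeff P i * q powi ((2*k-1) * int i) * ?f (nf (k-1) (m+i)))"
      using L False by (simp add: step_def o_def sum_upt_Suc deg del: upt_Suc)
    show ?thesis
    proof (cases "k = 1")
      case True
      have e: "\<And>i. q powi ((2*k-1) * int i) = q ^ i"
        using True by simp
      have r: "(\<Sum>i\<le>n. coeff P i * inverse q ^ i * tv (m+i)) = t * (q^2)^m * (\<Sum>i\<le>n. coeff P i * q ^ i * tv (m+i))"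
        by (rule rec)
      have "inverse t * ((inverse (q^2))^m * (\<Sum>i\<le>n. coeff P i * inverse q ^ i * tv (m+i)))
          = (\<Sum>i\<le>n. coeff P i * q ^ i * tv (m+i))"
        unfolding r using t q by (simp add: power_inverse field_simps)
      then show ?thesis unfolding LL RR using True by (simp add: fT_nf e mult.assoc add.commute)
    next
      case False
      then show ?thesis unfolding LL RR by (simp add: fT_nf)
    qed
  qed
qed



lemma sum_factor:
  fixes T :: complex and h :: "int \<Rightarrow> nat \<Rightarrow> complex"
  shows "sum_list (map (\<lambda>(c,k,m). c * (T * h k m)) L) = T * sum_list (map (\<lambda>(c,k,m). c * h k m) L)"
  by (induction L) (auto simp: algebra_simps)

lemma wdeg_Cons: "wdeg (g # x) = wdeg [g] + wdeg x"
  by (cases g) (simp_all add: wdeg_def)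

lemma tr_letter:
  assumes q: "q \<noteq> 0" and t: "t \<noteq> 0" and deg: "degree P = n"
    and rec: "\<And>j. (\<Sum>i\<le>n. coeff P i * inverse q ^ i * tv (j+i)) = t * (q^2)^j * (\<Sum>i\<le>n. coeff P i * q ^ i * tv (j+i))"
    and g: "g \<noteq> ZI" and y: "ZI \<notin> set y"
  shows "fT q P tv (g # y) = t powi wdeg [g] * fT q P tv (y @ [g])"
proof -
  let ?f = "fT q P tv"
  have c: "cond2 q P ?f" using q by (rule fT_cond2)
  have nt: "\<And>k m. ?f (g # nf k m) = t powi wdeg [g] * ?f (nf k m @ [g])"
  proof -
    fix k m
    show "?f (g # nf k m) = t powi wdeg [g] * ?f (nf k m @ [g])"
      using g trZ[OF q, of P tv k m] trU[OF q deg rec, of k m] trV[OF q t deg rec, of k m]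
      by (cases g) (auto simp: wdeg_simps power_int_minus)
  qed
  have N1: "?f ([g] @ y @ []) = sum_list (map (\<lambda>(c,k,m). c * ?f ([g] @ nf k m @ [])) (expand q P y))"
    using g y by (intro NF[OF c q]) auto
  have N2: "?f ([] @ y @ [g]) = sum_list (map (\<lambda>(c,k,m). c * ?f ([] @ nf k m @ [g])) (expand q P y))"
    using g y by (intro NF[OF c q]) auto
  have "?f (g # y) = sum_list (map (\<lambda>(c,k,m). c * (t powi wdeg [g] * ?f (nf k m @ [g]))) (expand q P y))"
    using N1 by (simp add: nt)
  also have "\<dots> = t powi wdeg [g] * ?f (y @ [g])"
    using N2 by (simp add: sum_factor)
  finally show ?thesis .
qed

lemma cyc_fT:
  assumes q: "q \<noteq> 0" and t: "t \<noteq> 0" and deg: "degree P = n"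
    and rec: "\<And>j. (\<Sum>i\<le>n. coeff P i * inverse q ^ i * tv (j+i)) = t * (q^2)^j * (\<Sum>i\<le>n. coeff P i * q ^ i * tv (j+i))"
  shows "ZI \<notin> set x \<Longrightarrow> ZI \<notin> set y \<Longrightarrow> fT q P tv (x @ y) = t powi wdeg x * fT q P tv (y @ x)"
proof (induction x arbitrary: y)
  case Nil then show ?case by (simp add: wdeg_def)
next
  case (Cons g x)
  let ?f = "fT q P tv"
  have "?f ((g # x) @ y) = ?f (g # (x @ y))" by simp
  also have "\<dots> = t powi wdeg [g] * ?f ((x @ y) @ [g])"
    using Cons.prems by (intro tr_letter[OF q t deg rec]) auto
  also have "?f ((x @ y) @ [g]) = ?f (x @ (y @ [g]))" by simp
  also have "\<dots> = t powi wdeg x * ?f ((y @ [g]) @ x)"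
    using Cons.prems by (intro Cons.IH) auto
  also have "(y @ [g]) @ x = y @ (g # x)" by simp
  finally show ?case using t by (simp add: wdeg_Cons[of g x] power_int_add mult.assoc)
qed

lemma tt_iff: "f \<in> twisted_traces q P t \<longleftrightarrow> (\<forall>w. ZI \<in> set w \<longrightarrow> f w = 0) \<and> cond2 q P f \<and> cond3 t f"
  by (simp add: twisted_traces_def cond2_def cond3_def)

theorem proposition5p5:
  fixes q t :: complex and P :: "complex poly" and n :: nat
  assumes "0 < cmod q" and "cmod q < 1"
    and "degree P = n" and "n \<ge> 1"
    and "t \<noteq> 0"
    and "\<forall>k::nat. t \<noteq> inverse (q ^ (2 * k))"
  shows "bij_betw (\<lambda>f. map (\<lambda>i. f (replicate i Z)) [0..<n])
           (twisted_traces q P t) {xs :: complex list. length xs = n}"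
proof -
  have q: "q \<noteq> 0" using assms(1) by auto
  have t: "t \<noteq> 0" using assms(5) .
  have deg: "degree P = n" using assms(3) .
  have n: "n \<ge> 1" using assms(4) .
  have ht: "\<forall>k::nat. t \<noteq> inverse (q ^ (2 * k))" using assms(6) .
  let ?F = "\<lambda>f. map (\<lambda>i. f (replicate i Z)) [0..<n]"
  have inj: "inj_on ?F (twisted_traces q P t)"
  proof (rule inj_onI)
    fix f1 f2 assume f1: "f1 \<in> twisted_traces q P t" and f2: "f2 \<in> twisted_traces q P t"
      and eq: "?F f1 = ?F f2"
    define g where "g = (\<lambda>w. f1 w - f2 w)"
    have c1: "\<forall>w. ZI \<in> set w \<longrightarrow> g w = 0" using f1 f2 by (simp add: tt_iff g_def)
    have c2: "cond2 q P g" using f1 f2 by (simp add: tt_iff g_def cond2_def ext_diff_fun)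
    have c3: "cond3 t g" using f1 f2 by (simp add: tt_iff g_def cond3_def ext_diff_fun)
    have z: "\<forall>i<n. g (replicate i Z) = 0"
    proof (intro allI impI)
      fix i assume i: "i < n"
      have "?F f1 ! i = ?F f2 ! i" by (simp only: eq)
      then show "g (replicate i Z) = 0" using i by (simp add: g_def)
    qed
    have "\<And>w. g w = 0" by (rule zero_all[OF c1 c2 c3 q t deg n ht z])
    then show "f1 = f2" by (auto simp: g_def fun_eq_iff)
  qed
  have img: "?F ` twisted_traces q P t = {xs. length xs = n}"
  proof
    show "?F ` twisted_traces q P t \<subseteq> {xs. length xs = n}" by auto
  next
    show "{xs. length xs = n} \<subseteq> ?F ` twisted_traces q P t"
    proof
      fix xs :: "complex list" assume "xs \<in> {xs. length xs = n}"
      then have len: "length xs = n" by simp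
      let ?tv = "tau xs q t P"
      let ?f = "fT q P ?tv"
      have rec: "\<And>j. (\<Sum>i\<le>n. coeff P i * inverse q ^ i * ?tv (j+i)) = t * (q^2)^j * (\<Sum>i\<le>n. coeff P i * q ^ i * ?tv (j+i))"
        by (rule tau_rec[OF q deg n ht])
      have c1: "\<forall>w. ZI \<in> set w \<longrightarrow> ?f w = 0" by (simp add: fT_def)
      have c2: "cond2 q P ?f" using q by (rule fT_cond2)
      have c3: "cond3 t ?f"
        by (rule cyc_cond3[OF t]) (rule cyc_fT[OF q t deg rec])
      have mem: "?f \<in> twisted_traces q P t" using c1 c2 c3 by (simp add: tt_iff)
      have "?F ?f = xs"
        by (rule nth_equalityI) (auto simp: len fT_Zpow tau_small deg)
      then show "xs \<in> ?F ` twisted_traces q P t" using mem by (metis image_eqI)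
    qed
  qed
  show ?thesis using inj img by (simp add: bij_betw_def)
qed


end
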